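(* Let $\mu,\nu$ be $\sigma$-finite invariant measures on $S$ and $\gamma,\delta$ invariant kernels on $S$ such that $$\iint\mathbf 1\{(s,t)\in\cdot\}\,\gamma(s,dt)\,\mu(ds)=\iint\mathbf 1\{(s,t)\in\cdot\}\,\delta(t,ds)\,\nu(dt).$$ Let $v,w:S\to[0,\infty]$ be measurable with $0<\mu_sv<\infty$, $0<\mu_sw<\infty$ for all $s$ and $\frac{\mu_bw}{\mu_bv}=\frac{\mu_{b'}w}{\mu_{b'}v}$ for all $b,b'\in O$, and let $m:S\times S\to[0,\infty]$ be measurable and invariant. Then $$\iint\Delta_v(s,t)w(s)m(s,t)\,\gamma(s,dt)\,\mu(ds)=\iint w(t)m(s,t)\,\delta(t,ds)\,\nu(dt),$$ where $\Delta_v(s,t):=\mu_tv/\mu_sv$.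
   Context: $G$ is a locally compact second countable Hausdorff group, $\lambda$ a left Haar measure. $(S,\mathcal S)$ is a Borel space on which $G$ acts measurably and properly (there is a measurable partition $B_1,B_2,\dots$ of $S$ with $\mu_s(B_n)<\infty$ for all $s,n$), $\mu_s$ being the image of $\lambda$ under $g\mapsto gs$. $O\in\mathcal S$ is a fixed system of orbit representatives. A measure $\mu$ on $S$ is invariant if $\mu(g^{-1}B)=\mu(B)$ for all $g,B$; a $\sigma$-finite kernel $\gamma$ on $S$ is invariant if $\gamma(gs,B)=\gamma(s,g^{-1}B)$; $m$ is invariant if $m(gs,gt)=m(s,t)$. *)

theory Defs
  imports "HOL-Probability.Probability" "HOL-Algebra.Group"
begin

definition lcsc_topological_group :: "('g::{second_countable_topology,t2_space}, 'b) monoid_scheme \<Rightarrow> bool" where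
  "lcsc_topological_group G \<longleftrightarrow>
     group G \<and> carrier G = UNIV \<and>
     locally_compact_space (euclidean :: 'g topology) \<and>
     continuous_on UNIV (\<lambda>(x,y). x \<otimes>\<^bsub>G\<^esub> y) \<and>
     continuous_on UNIV (\<lambda>x. inv\<^bsub>G\<^esub> x)"

definition left_haar_measure :: "('g::{second_countable_topology,t2_space}, 'b) monoid_scheme \<Rightarrow> 'g measure \<Rightarrow> bool" where
  "left_haar_measure G lam \<longleftrightarrow>
     sets lam = sets borel \<and>
     (\<forall>K. compact K \<longrightarrow> emeasure lam K < \<infinity>) \<and>
     (\<forall>U. open U \<and> U \<noteq> {} \<longrightarrow> emeasure lam U > 0) \<and>
     (\<forall>g. \<forall>A\<in>sets borel. emeasure lam ((\<lambda>x. g \<otimes>\<^bsub>G\<^esub> x) ` A) = emeasure lam A)"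

definition borel_space :: "'s measure \<Rightarrow> bool" where
  "borel_space S \<longleftrightarrow> (\<exists>f::'s \<Rightarrow> real. f \<in> S \<rightarrow>\<^sub>M borel \<and> inj_on f (space S) \<and>
       (\<forall>A\<in>sets S. f ` A \<in> sets borel))"

definition measurable_action :: "('g::{second_countable_topology,t2_space}, 'b) monoid_scheme \<Rightarrow> 's measure \<Rightarrow> ('g \<Rightarrow> 's \<Rightarrow> 's) \<Rightarrow> bool" where
  "measurable_action G S act \<longleftrightarrow>
     (\<forall>s\<in>space S. act \<one>\<^bsub>G\<^esub> s = s) \<and>
     (\<forall>g h. \<forall>s\<in>space S. act (g \<otimes>\<^bsub>G\<^esub> h) s = act g (act h s)) \<and>
     (\<lambda>(g,s). act g s) \<in> (borel \<Otimes>\<^sub>M S) \<rightarrow>\<^sub>M S"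

definition orbit_measure :: "'g measure \<Rightarrow> 's measure \<Rightarrow> ('g \<Rightarrow> 's \<Rightarrow> 's) \<Rightarrow> 's \<Rightarrow> 's measure" where
  "orbit_measure lam S act s = distr lam S (\<lambda>g. act g s)"

definition proper_action :: "'g measure \<Rightarrow> 's measure \<Rightarrow> ('g \<Rightarrow> 's \<Rightarrow> 's) \<Rightarrow> bool" where
  "proper_action lam S act \<longleftrightarrow>
     (\<exists>B::nat \<Rightarrow> 's set. range B \<subseteq> sets S \<and> disjoint_family B \<and> (\<Union>n. B n) = space S \<and>
        (\<forall>s\<in>space S. \<forall>n. emeasure (orbit_measure lam S act s) (B n) < \<infinity>))"

definition orbit_representatives :: "'s measure \<Rightarrow> ('g \<Rightarrow> 's \<Rightarrow> 's) \<Rightarrow> 's set \<Rightarrow> bool" where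
  "orbit_representatives S act Orb \<longleftrightarrow> Orb \<in> sets S \<and>
     (\<forall>s\<in>space S. \<exists>!b. b \<in> Orb \<and> (\<exists>g. act g b = s))"

definition invariant_measure :: "'s measure \<Rightarrow> ('g \<Rightarrow> 's \<Rightarrow> 's) \<Rightarrow> 's measure \<Rightarrow> bool" where
  "invariant_measure S act mu \<longleftrightarrow> sets mu = sets S \<and>
     (\<forall>g. \<forall>B\<in>sets S. emeasure mu (act g -` B \<inter> space S) = emeasure mu B)"

definition sigma_finite_kernel :: "'s measure \<Rightarrow> ('s \<Rightarrow> 's measure) \<Rightarrow> bool" where
  "sigma_finite_kernel S \<gamma> \<longleftrightarrow>
     (\<forall>s\<in>space S. sets (\<gamma> s) = sets S) \<and>
     (\<forall>B\<in>sets S. (\<lambda>s. emeasure (\<gamma> s) B) \<in> borel_measurable S) \<and>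
     (\<exists>B::nat \<Rightarrow> 's set. range B \<subseteq> sets S \<and> disjoint_family B \<and> (\<Union>n. B n) = space S \<and>
        (\<forall>s\<in>space S. \<forall>n. emeasure (\<gamma> s) (B n) < \<infinity>))"

definition invariant_kernel :: "'s measure \<Rightarrow> ('g \<Rightarrow> 's \<Rightarrow> 's) \<Rightarrow> ('s \<Rightarrow> 's measure) \<Rightarrow> bool" where
  "invariant_kernel S act \<gamma> \<longleftrightarrow> sigma_finite_kernel S \<gamma> \<and>
     (\<forall>g. \<forall>s\<in>space S. \<forall>B\<in>sets S. emeasure (\<gamma> (act g s)) B = emeasure (\<gamma> s) (act g -` B \<inter> space S))"

end

theory Submission
  imports Defs
begin


lemma inv_le1: "a < \<infinity> \<Longrightarrow> inverse (1 + a) * a \<le> (1::ennreal)"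
proof -
  assume a: "a < \<infinity>"
  have "inverse (1 + a) * a \<le> inverse (1 + a) * (1 + a)" by (intro mult_left_mono) auto
  also have "\<dots> = 1" using a divide_ennreal_def divide_eq_1_ennreal by (auto simp: mult.commute)
  finally show "inverse (1 + a) * a \<le> (1::ennreal)" .
qed
lemma cancel1: "a < \<infinity> \<Longrightarrow> (1 + a) * inverse (1 + a) = (1::ennreal)"
  using divide_ennreal_def ennreal_divide_self by fastforce

lemma kernel_nn_integral_measurable:
  fixes K :: "'x \<Rightarrow> 's measure" and f :: "'x \<Rightarrow> 's \<Rightarrow> ennreal" and B :: "nat \<Rightarrow> 's set"
  assumes sets_K: "\<And>x. x \<in> space X \<Longrightarrow> sets (K x) = sets S"
    and meas_K: "\<And>A. A \<in> sets S \<Longrightarrow> (\<lambda>x. emeasure (K x) A) \<in> borel_measurable X"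
    and B: "range B \<subseteq> sets S" "disjoint_family B" "(\<Union>n. B n) = space S"
    and fin: "\<And>x n. x \<in> space X \<Longrightarrow> emeasure (K x) (B n) < \<infinity>"
    and f: "(\<lambda>(x,t). f x t) \<in> borel_measurable (X \<Otimes>\<^sub>M S)"
  shows "(\<lambda>x. \<integral>\<^sup>+t. f x t \<partial>K x) \<in> borel_measurable X"
proof (cases "space S = {}")
  case True
  have "(\<lambda>x. \<integral>\<^sup>+t. f x t \<partial>K x) \<in> borel_measurable X \<longleftrightarrow> (\<lambda>x. 0::ennreal) \<in> borel_measurable X"
  proof (rule measurable_cong)
    fix x assume x: "x \<in> space X"
    have "space (K x) = {}" using sets_eq_imp_space_eq[OF sets_K[OF x]] True by simp
    then show "(\<integral>\<^sup>+t. f x t \<partial>K x) = 0" by (simp add: nn_integral_empty)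
  qed
  then show ?thesis by simp
next
  case False
  define c where "c n x = inverse (1 + emeasure (K x) (B n))" for n x
  define Kn where "Kn n x = density (K x) (\<lambda>t. c n x * indicator (B n) t)" for n x
  have Bn: "B n \<in> sets S" for n using B by auto
  have cm: "(\<lambda>x. c n x) \<in> borel_measurable X" for n
    unfolding c_def using meas_K[OF Bn] by measurable
  have emKn: "emeasure (Kn n x) A = c n x * emeasure (K x) (A \<inter> B n)"
    if "x \<in> space X" "A \<in> sets S" for n x A
  proof -
    have "emeasure (Kn n x) A = \<integral>\<^sup>+t. c n x * indicator (A \<inter> B n) t \<partial>K x"
      unfolding Kn_def using that sets_K[OF that(1)] Bn
      by (subst emeasure_density) (auto intro!: nn_integral_cong simp: indicator_def)
    also have "\<dots> = c n x * emeasure (K x) (A \<inter> B n)"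
      using that sets_K[OF that(1)] Bn by (subst nn_integral_cmult_indicator) auto
    finally show ?thesis .
  qed
  have Kn_meas: "Kn n \<in> measurable X (subprob_algebra S)" for n
  proof (rule measurable_subprob_algebra)
    fix x assume x: "x \<in> space X"
    show sK: "sets (Kn n x) = sets S" unfolding Kn_def using sets_K[OF x] by simp
    have sp: "space (Kn n x) = space S" using sK by (rule sets_eq_imp_space_eq)
    have "emeasure (Kn n x) (space (Kn n x)) = c n x * emeasure (K x) (B n)"
      using emKn[OF x, of "space S"] sp B(1) by (auto simp: Int_absorb1 sets.sets_into_space)
    also have "\<dots> \<le> 1"
      unfolding c_def using fin[OF x, of n] by (rule inv_le1)
    finally show "subprob_space (Kn n x)"
      using False sp by (intro subprob_spaceI) auto
  next
    fix A assume A: "A \<in> sets S"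
    have "(\<lambda>x. c n x * emeasure (K x) (A \<inter> B n)) \<in> borel_measurable X"
      using cm meas_K[of "A \<inter> B n"] A Bn by measurable
    then show "(\<lambda>x. emeasure (Kn n x) A) \<in> borel_measurable X"
      by (rule measurable_cong[THEN iffD1, rotated]) (simp add: emKn A)
  qed
  have eq: "(\<integral>\<^sup>+t. f x t \<partial>K x) = (\<Sum>n. (1 + emeasure (K x) (B n)) * \<integral>\<^sup>+t. f x t \<partial>Kn n x)"
    if x: "x \<in> space X" for x
  proof -
    have fx: "f x \<in> borel_measurable (K x)"
      using measurable_Pair2[OF f x] sets_K[OF x] by (simp cong: measurable_cong_sets)
    have "(1 + emeasure (K x) (B n)) * (\<integral>\<^sup>+t. f x t \<partial>Kn n x) = \<integral>\<^sup>+t. indicator (B n) t * f x t \<partial>K x" for n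
    proof -
      have cc: "(1 + emeasure (K x) (B n)) * c n x = 1"
        unfolding c_def using fin[OF x, of n] by (rule cancel1)
      have "(1 + emeasure (K x) (B n)) * (\<integral>\<^sup>+t. f x t \<partial>Kn n x) =
          (1 + emeasure (K x) (B n)) * \<integral>\<^sup>+t. c n x * indicator (B n) t * f x t \<partial>K x"
        unfolding Kn_def using fx Bn sets_K[OF x] by (subst nn_integral_density) auto
      also have "\<dots> = \<integral>\<^sup>+t. ((1 + emeasure (K x) (B n)) * c n x) * (indicator (B n) t * f x t) \<partial>K x"
        using fx Bn sets_K[OF x] by (subst nn_integral_cmult[symmetric]) (auto simp: mult.assoc)
      finally show ?thesis using cc by simp
    qed
    then have "(\<Sum>n. (1 + emeasure (K x) (B n)) * \<integral>\<^sup>+t. f x t \<partial>Kn n x) = (\<Sum>n. \<integral>\<^sup>+t. indicator (B n) t * f x t \<partial>K x)"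
      by simp
    also have "\<dots> = \<integral>\<^sup>+t. (\<Sum>n. indicator (B n) t * f x t) \<partial>K x"
      using fx Bn sets_K[OF x] by (subst nn_integral_suminf) auto
    also have "\<dots> = \<integral>\<^sup>+t. f x t \<partial>K x"
    proof (rule nn_integral_cong)
      fix t assume "t \<in> space (K x)"
      then have t: "t \<in> space S" using sets_eq_imp_space_eq[OF sets_K[OF x]] by simp
      have "(\<Sum>n. indicator (B n) t * f x t) = (\<Sum>n. indicator (B n) t) * f x t"
        by (rule ennreal_suminf_multc)
      also have "\<dots> = f x t"
        using suminf_indicator[OF B(2), of t] B(3) t by simp
      finally show "(\<Sum>n. indicator (B n) t * f x t) = f x t" .
    qed
    finally show ?thesis by simp
  qed
  have "(\<lambda>x. \<Sum>n. (1 + emeasure (K x) (B n)) * \<integral>\<^sup>+t. f x t \<partial>Kn n x) \<in> borel_measurable X"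
  proof -
    have "(\<lambda>x. \<integral>\<^sup>+t. f x t \<partial>Kn n x) \<in> borel_measurable X" for n
      by (rule nn_integral_measurable_subprob_algebra2[OF f Kn_meas])
    then show ?thesis using meas_K[OF Bn] by measurable
  qed
  then show ?thesis by (rule measurable_cong[THEN iffD1, rotated]) (simp add: eq)
qed



lemma ediv_mult_cancel: fixes a c :: ennreal shows "c \<noteq> 0 \<Longrightarrow> c \<noteq> \<top> \<Longrightarrow> a / c * c = a"
  by (metis ennreal_times_divide ennreal_divide_times mult_divide_eq_ennreal)
lemma ediv_solve: fixes a b c :: ennreal shows "a * b = c \<Longrightarrow> a \<noteq> 0 \<Longrightarrow> a \<noteq> \<top> \<Longrightarrow> b = c / a"
  by (metis mult.commute mult_divide_eq_ennreal)
lemma ediv_cross: fixes a b c d :: ennreal shows "a * b = c * d \<Longrightarrow> a \<noteq> 0 \<Longrightarrow> a \<noteq> \<top> \<Longrightarrow> d \<noteq> 0 \<Longrightarrow> d \<noteq> \<top> \<Longrightarrow> b / d = c / a"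
proof -
  assume h: "a * b = c * d" "a \<noteq> 0" "a \<noteq> \<top>" "d \<noteq> 0" "d \<noteq> \<top>"
  have "b = (c * d) / a" using ediv_solve[OF h(1) h(2,3)] .
  also have "\<dots> = c / a * d" by (simp add: ennreal_times_divide mult.commute)
  finally have "b / d = c / a * d / d" by simp
  also have "\<dots> = c / a" using h(4,5) by (metis mult_divide_eq_ennreal)
  finally show ?thesis .
qed



locale haar_ctx =
  fixes G :: "('g::{second_countable_topology,t2_space}, 'b) monoid_scheme" and lam :: "'g measure"
  assumes grp: "group G" and carr: "carrier G = UNIV"
    and mult_meas: "(\<lambda>p. fst p \<otimes>\<^bsub>G\<^esub> snd p) \<in> (borel \<Otimes>\<^sub>M borel) \<rightarrow>\<^sub>M borel"
    and inv_meas: "(\<lambda>x. inv\<^bsub>G\<^esub> x) \<in> borel \<rightarrow>\<^sub>M borel"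
    and sets_lam[measurable_cong]: "sets lam = sets borel"
    and linv: "\<And>a f. f \<in> borel_measurable borel \<Longrightarrow> (\<integral>\<^sup>+x. f (a \<otimes>\<^bsub>G\<^esub> x) \<partial>lam) = (\<integral>\<^sup>+x. f x \<partial>lam)"
    and sf: "sigma_finite_measure lam"
    and pos: "emeasure lam UNIV > 0"
begin

lemma assoc[simp]: "x \<otimes>\<^bsub>G\<^esub> y \<otimes>\<^bsub>G\<^esub> z = x \<otimes>\<^bsub>G\<^esub> (y \<otimes>\<^bsub>G\<^esub> z)"
  using group.is_monoid[OF grp] carr by (simp add: monoid.m_assoc)
lemma l_inv'[simp]: "inv\<^bsub>G\<^esub> x \<otimes>\<^bsub>G\<^esub> x = \<one>\<^bsub>G\<^esub>" using grp carr by (simp add: group.l_inv)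
lemma r_inv'[simp]: "x \<otimes>\<^bsub>G\<^esub> inv\<^bsub>G\<^esub> x = \<one>\<^bsub>G\<^esub>" using grp carr by (simp add: group.r_inv)
lemma l_one'[simp]: "\<one>\<^bsub>G\<^esub> \<otimes>\<^bsub>G\<^esub> x = x" using group.is_monoid[OF grp] carr by (simp add: monoid.l_one)
lemma r_one'[simp]: "x \<otimes>\<^bsub>G\<^esub> \<one>\<^bsub>G\<^esub> = x" using group.is_monoid[OF grp] carr by (simp add: monoid.r_one)
lemma inv_inv'[simp]: "inv\<^bsub>G\<^esub> (inv\<^bsub>G\<^esub> x) = x" using grp carr by (simp add: group.inv_inv)
lemma inv_mult'[simp]: "inv\<^bsub>G\<^esub> (x \<otimes>\<^bsub>G\<^esub> y) = inv\<^bsub>G\<^esub> y \<otimes>\<^bsub>G\<^esub> inv\<^bsub>G\<^esub> x"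
  using grp carr by (simp add: group.inv_mult_group)
lemma cancel1[simp]: "x \<otimes>\<^bsub>G\<^esub> (inv\<^bsub>G\<^esub> x \<otimes>\<^bsub>G\<^esub> y) = y"
  by (simp flip: assoc)
lemma cancel2[simp]: "inv\<^bsub>G\<^esub> x \<otimes>\<^bsub>G\<^esub> (x \<otimes>\<^bsub>G\<^esub> y) = y"
  by (simp flip: assoc)

lemma mult_measurable[measurable (raw)]:
  "f \<in> M \<rightarrow>\<^sub>M borel \<Longrightarrow> g \<in> M \<rightarrow>\<^sub>M borel \<Longrightarrow> (\<lambda>x. f x \<otimes>\<^bsub>G\<^esub> g x) \<in> M \<rightarrow>\<^sub>M borel"
  using measurable_compose[OF measurable_Pair mult_meas, of f M g] by simp

lemma inv_measurable[measurable (raw)]: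
  assumes "f \<in> M \<rightarrow>\<^sub>M borel" shows "(\<lambda>x. inv\<^bsub>G\<^esub> (f x)) \<in> M \<rightarrow>\<^sub>M borel"
  by (rule measurable_compose[OF assms inv_meas])

lemma space_lam[simp]: "space lam = UNIV"
  using sets_eq_imp_space_eq[OF sets_lam] by simp

sublocale lam: sigma_finite_measure lam by (rule sf)
sublocale lamlam: pair_sigma_finite lam lam by unfold_locales

lemma linv': "f \<in> borel_measurable borel \<Longrightarrow> (\<integral>\<^sup>+x. f x \<partial>lam) = (\<integral>\<^sup>+x. f (a \<otimes>\<^bsub>G\<^esub> x) \<partial>lam)"
  using linv by simp

lemma weil:
  assumes f[measurable]: "f \<in> borel_measurable borel" and g[measurable]: "g \<in> borel_measurable borel"
  shows "(\<integral>\<^sup>+x. g x * (\<integral>\<^sup>+y. f (y \<otimes>\<^bsub>G\<^esub> x) \<partial>lam) \<partial>lam) = (\<integral>\<^sup>+y. f y \<partial>lam) * (\<integral>\<^sup>+x. g (inv\<^bsub>G\<^esub> x) \<partial>lam)"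
proof -
  have "(\<integral>\<^sup>+x. g x * (\<integral>\<^sup>+y. f (y \<otimes>\<^bsub>G\<^esub> x) \<partial>lam) \<partial>lam) = (\<integral>\<^sup>+x. \<integral>\<^sup>+y. g x * f (y \<otimes>\<^bsub>G\<^esub> x) \<partial>lam \<partial>lam)"
    by (intro nn_integral_cong) (simp add: nn_integral_cmult)
  also have "\<dots> = (\<integral>\<^sup>+y. \<integral>\<^sup>+x. g x * f (y \<otimes>\<^bsub>G\<^esub> x) \<partial>lam \<partial>lam)"
    by (rule lamlam.Fubini'[symmetric]) measurable
  also have "\<dots> = (\<integral>\<^sup>+y. \<integral>\<^sup>+x. g (inv\<^bsub>G\<^esub> y \<otimes>\<^bsub>G\<^esub> x) * f x \<partial>lam \<partial>lam)"
  proof (rule nn_integral_cong)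
    fix y assume "y \<in> space lam"
    have m: "(\<lambda>x. g x * f (y \<otimes>\<^bsub>G\<^esub> x)) \<in> borel_measurable borel" by measurable
    show "(\<integral>\<^sup>+x. g x * f (y \<otimes>\<^bsub>G\<^esub> x) \<partial>lam) = (\<integral>\<^sup>+x. g (inv\<^bsub>G\<^esub> y \<otimes>\<^bsub>G\<^esub> x) * f x \<partial>lam)"
      using linv'[OF m, of "inv\<^bsub>G\<^esub> y"] by simp
  qed
  also have "\<dots> = (\<integral>\<^sup>+x. \<integral>\<^sup>+y. g (inv\<^bsub>G\<^esub> y \<otimes>\<^bsub>G\<^esub> x) * f x \<partial>lam \<partial>lam)"
    by (rule lamlam.Fubini') measurable
  also have "\<dots> = (\<integral>\<^sup>+x. f x * (\<integral>\<^sup>+y. g (inv\<^bsub>G\<^esub> y) \<partial>lam) \<partial>lam)"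
  proof (rule nn_integral_cong)
    fix x assume "x \<in> space lam"
    have m: "(\<lambda>y. g (inv\<^bsub>G\<^esub> y \<otimes>\<^bsub>G\<^esub> x)) \<in> borel_measurable borel" by measurable
    have "(\<integral>\<^sup>+y. g (inv\<^bsub>G\<^esub> y \<otimes>\<^bsub>G\<^esub> x) \<partial>lam) = (\<integral>\<^sup>+y. g (inv\<^bsub>G\<^esub> y) \<partial>lam)"
      using linv'[OF m, of x] by simp
    then show "(\<integral>\<^sup>+y. g (inv\<^bsub>G\<^esub> y \<otimes>\<^bsub>G\<^esub> x) * f x \<partial>lam) = f x * (\<integral>\<^sup>+y. g (inv\<^bsub>G\<^esub> y) \<partial>lam)"
      by (subst nn_integral_multc) (auto simp: mult.commute)
  qed
  also have "\<dots> = (\<integral>\<^sup>+y. f y \<partial>lam) * (\<integral>\<^sup>+x. g (inv\<^bsub>G\<^esub> x) \<partial>lam)"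
    by (simp add: nn_integral_multc)
  finally show ?thesis .
qed

lemma inv_null:
  assumes A[measurable]: "A \<in> sets borel" and A0: "emeasure lam A = 0"
  shows "emeasure lam {x. inv\<^bsub>G\<^esub> x \<in> A} = 0"
proof -
  have "emeasure lam UNIV * emeasure lam A = (\<integral>\<^sup>+x. indicator A x * emeasure lam UNIV \<partial>lam)"
    by (simp add: nn_integral_multc mult.commute)
  also have "\<dots> = (\<integral>\<^sup>+x. indicator A x * (\<integral>\<^sup>+y. (\<lambda>_. 1) (y \<otimes>\<^bsub>G\<^esub> x) \<partial>lam) \<partial>lam)"
    by simp
  also have "\<dots> = (\<integral>\<^sup>+y. 1 \<partial>lam) * (\<integral>\<^sup>+x. indicator A (inv\<^bsub>G\<^esub> x) \<partial>lam)"
    by (rule weil) auto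
  also have "\<dots> = emeasure lam UNIV * emeasure lam {x. inv\<^bsub>G\<^esub> x \<in> A}"
  proof -
    have "(\<integral>\<^sup>+x. indicator A (inv\<^bsub>G\<^esub> x) \<partial>lam) = (\<integral>\<^sup>+x. indicator {x. inv\<^bsub>G\<^esub> x \<in> A} x \<partial>lam)"
      by (intro nn_integral_cong) (simp add: indicator_def)
    also have "\<dots> = emeasure lam {x. inv\<^bsub>G\<^esub> x \<in> A}"
      by (intro nn_integral_indicator) measurable
    finally show ?thesis by simp
  qed
  finally show ?thesis using A0 pos by auto
qed

lemma left_null:
  assumes A[measurable]: "A \<in> sets borel"
  shows "emeasure lam {x. a \<otimes>\<^bsub>G\<^esub> x \<in> A} = emeasure lam A"
proof -
  have "emeasure lam {x. a \<otimes>\<^bsub>G\<^esub> x \<in> A} = (\<integral>\<^sup>+x. indicator A (a \<otimes>\<^bsub>G\<^esub> x) \<partial>lam)"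
  proof -
    have "(\<integral>\<^sup>+x. indicator A (a \<otimes>\<^bsub>G\<^esub> x) \<partial>lam) = (\<integral>\<^sup>+x. indicator {x. a \<otimes>\<^bsub>G\<^esub> x \<in> A} x \<partial>lam)"
      by (intro nn_integral_cong) (simp add: indicator_def)
    also have "\<dots> = emeasure lam {x. a \<otimes>\<^bsub>G\<^esub> x \<in> A}"
      by (intro nn_integral_indicator) measurable
    finally show ?thesis by simp
  qed
  also have "\<dots> = (\<integral>\<^sup>+x. indicator A x \<partial>lam)" by (rule linv) simp
  finally show ?thesis by simp
qed

lemma right_null:
  assumes A[measurable]: "A \<in> sets borel" and A0: "emeasure lam A = 0"
  shows "emeasure lam {y. y \<otimes>\<^bsub>G\<^esub> a \<in> A} = 0"
proof -
  define N1 where "N1 = {z. inv\<^bsub>G\<^esub> z \<in> A}"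
  have N1[measurable]: "N1 \<in> sets borel" unfolding N1_def by measurable
  have "emeasure lam N1 = 0" unfolding N1_def by (rule inv_null[OF A A0])
  define N3 where "N3 = {z. inv\<^bsub>G\<^esub> a \<otimes>\<^bsub>G\<^esub> z \<in> N1}"
  have N3[measurable]: "N3 \<in> sets borel" unfolding N3_def by measurable
  have N30: "emeasure lam N3 = 0" unfolding N3_def using left_null[OF N1] \<open>emeasure lam N1 = 0\<close> by simp
  have "{y. y \<otimes>\<^bsub>G\<^esub> a \<in> A} = {y. inv\<^bsub>G\<^esub> y \<in> N3}"
    by (auto simp: N1_def N3_def)
  then show ?thesis using inv_null[OF N3 N30] by simp
qed

lemma ae_from_integrals:
  assumes [measurable]: "F1 \<in> borel_measurable borel" "F2 \<in> borel_measurable borel"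
    and eq: "\<And>A. A \<in> sets borel \<Longrightarrow> (\<integral>\<^sup>+x. indicator A x * F1 x \<partial>lam) = (\<integral>\<^sup>+x. indicator A x * F2 x \<partial>lam)"
  shows "AE x in lam. F1 x = F2 x"
proof (rule lam.density_unique)
  show "density lam F1 = density lam F2"
  proof (rule measure_eqI)
    fix A assume "A \<in> sets (density lam F1)"
    then have A: "A \<in> sets borel" using sets_lam by simp
    then show "emeasure (density lam F1) A = emeasure (density lam F2) A"
    proof -
      have "(\<integral>\<^sup>+x. F1 x * indicator A x \<partial>lam) = (\<integral>\<^sup>+x. F2 x * indicator A x \<partial>lam)"
        using eq[OF A] by (simp add: mult.commute)
      then show ?thesis using A sets_lam by (simp add: emeasure_density)
    qed
  qed simp
qed measurable

end



locale main_ctx = haar_ctx G lam for G :: "('g::{second_countable_topology,t2_space}, 'b) monoid_scheme" and lam +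
  fixes S :: "'s measure" and act :: "'g \<Rightarrow> 's \<Rightarrow> 's" and mu :: "'s measure"
    and \<gamma> :: "'s \<Rightarrow> 's measure" and m :: "'s \<Rightarrow> 's \<Rightarrow> ennreal" and B :: "nat \<Rightarrow> 's set"
  assumes act_meas: "(\<lambda>(g,s). act g s) \<in> (borel \<Otimes>\<^sub>M S) \<rightarrow>\<^sub>M S"
    and act_one: "\<And>s. s \<in> space S \<Longrightarrow> act \<one>\<^bsub>G\<^esub> s = s"
    and act_mult: "\<And>g h s. s \<in> space S \<Longrightarrow> act (g \<otimes>\<^bsub>G\<^esub> h) s = act g (act h s)"
    and mu_sets[measurable_cong]: "sets mu = sets S"
    and mu_inv: "\<And>g A. A \<in> sets S \<Longrightarrow> emeasure mu (act g -` A \<inter> space S) = emeasure mu A"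
    and mu_sf: "sigma_finite_measure mu"
    and gam_sets: "\<And>s. s \<in> space S \<Longrightarrow> sets (\<gamma> s) = sets S"
    and gam_meas: "\<And>A. A \<in> sets S \<Longrightarrow> (\<lambda>s. emeasure (\<gamma> s) A) \<in> borel_measurable S"
    and B: "range B \<subseteq> sets S" "disjoint_family B" "(\<Union>n. B n) = space S"
    and gam_fin: "\<And>s n. s \<in> space S \<Longrightarrow> emeasure (\<gamma> s) (B n) < \<infinity>"
    and gam_inv: "\<And>g s A. s \<in> space S \<Longrightarrow> A \<in> sets S \<Longrightarrow> emeasure (\<gamma> (act g s)) A = emeasure (\<gamma> s) (act g -` A \<inter> space S)"
    and m_meas: "(\<lambda>(s, t). m s t) \<in> borel_measurable (S \<Otimes>\<^sub>M S)"
    and m_inv: "\<And>g s t. s \<in> space S \<Longrightarrow> t \<in> space S \<Longrightarrow> m (act g s) (act g t) = m s t"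
begin

lemma act_measurable[measurable (raw)]:
  assumes "f \<in> M \<rightarrow>\<^sub>M borel" "g \<in> M \<rightarrow>\<^sub>M S"
  shows "(\<lambda>x. act (f x) (g x)) \<in> M \<rightarrow>\<^sub>M S"
  using measurable_compose[OF measurable_Pair[OF assms] act_meas] by simp

lemma m_measurable[measurable (raw)]:
  assumes "f \<in> M \<rightarrow>\<^sub>M S" "g \<in> M \<rightarrow>\<^sub>M S"
  shows "(\<lambda>x. m (f x) (g x)) \<in> borel_measurable M"
  using measurable_compose[OF measurable_Pair[OF assms] m_meas] by simp

lemma space_mu[simp]: "space mu = space S" using sets_eq_imp_space_eq[OF mu_sets] .

lemma act_space: "s \<in> space S \<Longrightarrow> act g s \<in> space S"
proof -
  assume s: "s \<in> space S"
  have "(\<lambda>x. act g x) \<in> S \<rightarrow>\<^sub>M S" by measurable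
  from measurable_space[OF this s] show ?thesis .
qed

lemma act_inv_cancel[simp]: "s \<in> space S \<Longrightarrow> act (inv\<^bsub>G\<^esub> h) (act h s) = s"
  by (simp flip: act_mult add: act_one)

lemma kmeas:
  assumes f: "(\<lambda>(x,t). f x t) \<in> borel_measurable (X \<Otimes>\<^sub>M S)" and p[measurable]: "p \<in> X \<rightarrow>\<^sub>M S"
  shows "(\<lambda>x. \<integral>\<^sup>+t. f x t \<partial>\<gamma> (p x)) \<in> borel_measurable X"
proof (rule kernel_nn_integral_measurable[OF _ _ B _ f])
  fix x assume "x \<in> space X"
  then have "p x \<in> space S" using measurable_space[OF p] by simp
  then show "sets (\<gamma> (p x)) = sets S" "\<And>n. emeasure (\<gamma> (p x)) (B n) < \<infinity>"
    using gam_sets gam_fin by auto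
next
  fix A assume "A \<in> sets S"
  then show "(\<lambda>x. emeasure (\<gamma> (p x)) A) \<in> borel_measurable X"
    using measurable_compose[OF p gam_meas] by simp
qed

lemma gam_sf: "s \<in> space S \<Longrightarrow> sigma_finite_measure (\<gamma> s)"
  unfolding sigma_finite_measure_def
  apply (rule exI[of _ "range B"])
  using B gam_fin[of s] gam_sets[of s] sets_eq_imp_space_eq[OF gam_sets[of s]] by (auto simp: less_top)

sublocale mu: sigma_finite_measure mu by (rule mu_sf)

definition L :: "('s \<Rightarrow> 's \<Rightarrow> ennreal) \<Rightarrow> ennreal" where
  "L F = (\<integral>\<^sup>+s. \<integral>\<^sup>+t. F s t \<partial>\<gamma> s \<partial>mu)"

lemma L_cong: "(\<And>s t. s \<in> space S \<Longrightarrow> t \<in> space S \<Longrightarrow> F s t = F' s t) \<Longrightarrow> L F = L F'"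
  unfolding L_def
  by (intro nn_integral_cong) (simp add: sets_eq_imp_space_eq[OF gam_sets])

lemma L_swap:
  assumes H[measurable]: "(\<lambda>(h, s, t). H h s t) \<in> borel_measurable (borel \<Otimes>\<^sub>M (S \<Otimes>\<^sub>M S))"
  shows "L (\<lambda>s t. \<integral>\<^sup>+h. H h s t \<partial>lam) = (\<integral>\<^sup>+h. L (H h) \<partial>lam)"
proof -
  have H3[measurable]: "(\<lambda>x. H (f x) (g x) (k x)) \<in> borel_measurable M"
    if [measurable]: "f \<in> M \<rightarrow>\<^sub>M borel" "g \<in> M \<rightarrow>\<^sub>M S" "k \<in> M \<rightarrow>\<^sub>M S" for f g k and M :: "'z measure"
  proof -
    have "(\<lambda>x. (f x, g x, k x)) \<in> M \<rightarrow>\<^sub>M (borel \<Otimes>\<^sub>M (S \<Otimes>\<^sub>M S))" by measurable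
    from measurable_compose[OF this H] show ?thesis by simp
  qed
  have "L (\<lambda>s t. \<integral>\<^sup>+h. H h s t \<partial>lam) = (\<integral>\<^sup>+s. \<integral>\<^sup>+h. \<integral>\<^sup>+t. H h s t \<partial>\<gamma> s \<partial>lam \<partial>mu)"
    unfolding L_def
  proof (rule nn_integral_cong)
    fix s assume s: "s \<in> space mu"
    interpret g: sigma_finite_measure "\<gamma> s" using gam_sf s by simp
    interpret gl: pair_sigma_finite "\<gamma> s" lam by unfold_locales
    have "(\<lambda>(t, h). H h s t) \<in> borel_measurable (\<gamma> s \<Otimes>\<^sub>M lam)"
    proof -
      have "(\<lambda>x. H (snd x) s (fst x)) \<in> borel_measurable (S \<Otimes>\<^sub>M borel)"
        by (rule H3) (use s in auto)
      then have "(\<lambda>(t, h). H h s t) \<in> borel_measurable (S \<Otimes>\<^sub>M borel)" by (simp add: split_beta')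
      moreover have "sets (\<gamma> s \<Otimes>\<^sub>M lam) = sets (S \<Otimes>\<^sub>M borel)"
        using s gam_sets sets_lam by (intro sets_pair_measure_cong) auto
      ultimately show ?thesis by (simp cong: measurable_cong_sets)
    qed
    then show "(\<integral>\<^sup>+t. \<integral>\<^sup>+h. H h s t \<partial>lam \<partial>\<gamma> s) = (\<integral>\<^sup>+h. \<integral>\<^sup>+t. H h s t \<partial>\<gamma> s \<partial>lam)"
      using gl.Fubini'[of "\<lambda>t h. H h s t"] by simp
  qed
  also have "\<dots> = (\<integral>\<^sup>+h. \<integral>\<^sup>+s. \<integral>\<^sup>+t. H h s t \<partial>\<gamma> s \<partial>mu \<partial>lam)"
  proof -
    interpret ml: pair_sigma_finite mu lam by unfold_locales
    have "(\<lambda>x. \<integral>\<^sup>+t. H (snd x) (fst x) t \<partial>\<gamma> (fst x)) \<in> borel_measurable (S \<Otimes>\<^sub>M borel)"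
    proof (rule kmeas)
      have "(\<lambda>y. H (snd (fst y)) (fst (fst y)) (snd y)) \<in> borel_measurable ((S \<Otimes>\<^sub>M borel) \<Otimes>\<^sub>M S)"
        by (rule H3) measurable
      then show "(\<lambda>(x,t). H (snd x) (fst x) t) \<in> borel_measurable ((S \<Otimes>\<^sub>M borel) \<Otimes>\<^sub>M S)"
        by (simp add: split_beta')
    qed measurable
    moreover have "sets (mu \<Otimes>\<^sub>M lam) = sets (S \<Otimes>\<^sub>M borel)"
      by (intro sets_pair_measure_cong) (auto simp: mu_sets sets_lam)
    ultimately have "(\<lambda>(s, h). \<integral>\<^sup>+t. H h s t \<partial>\<gamma> s) \<in> borel_measurable (mu \<Otimes>\<^sub>M lam)"
      by (simp add: split_beta' cong: measurable_cong_sets)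
    then show ?thesis using ml.Fubini'[of "\<lambda>s h. \<integral>\<^sup>+t. H h s t \<partial>\<gamma> s"] by simp
  qed
  finally show ?thesis unfolding L_def .
qed


lemma F2meas:
  assumes F: "(\<lambda>(s,t). F s t) \<in> borel_measurable (S \<Otimes>\<^sub>M S)"
    and "f \<in> M \<rightarrow>\<^sub>M S" "k \<in> M \<rightarrow>\<^sub>M S"
  shows "(\<lambda>x. F (f x) (k x)) \<in> borel_measurable M"
  using measurable_compose[OF measurable_Pair[OF assms(2,3)] F] by simp

lemma Psi_meas:
  assumes F: "(\<lambda>(s,t). F s t) \<in> borel_measurable (S \<Otimes>\<^sub>M S)"
  shows "(\<lambda>s. \<integral>\<^sup>+t. F s t \<partial>\<gamma> s) \<in> borel_measurable S"
  using kmeas[where p="\<lambda>x. x" and X=S, OF F] by simp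

lemma act_g_meas[measurable]: "act g \<in> S \<rightarrow>\<^sub>M S"
proof -
  have "(\<lambda>x. act g x) \<in> S \<rightarrow>\<^sub>M S" by measurable
  then show ?thesis by simp
qed

lemma L_inv:
  assumes F: "(\<lambda>(s,t). F s t) \<in> borel_measurable (S \<Otimes>\<^sub>M S)"
  shows "L (\<lambda>s t. F (act g s) (act g t)) = L F"
proof -
  note F2 = F2meas[OF F]
  have step1: "(\<integral>\<^sup>+t. F (act g s) (act g t) \<partial>\<gamma> s) = (\<integral>\<^sup>+t. F (act g s) t \<partial>\<gamma> (act g s))"
    if s: "s \<in> space S" for s
  proof -
    have ag: "act g \<in> \<gamma> s \<rightarrow>\<^sub>M S"
      by (subst measurable_cong_sets[OF gam_sets[OF s] refl]) (rule act_g_meas)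
    have d: "distr (\<gamma> s) S (act g) = \<gamma> (act g s)"
    proof (rule measure_eqI)
      show "sets (distr (\<gamma> s) S (act g)) = sets (\<gamma> (act g s))" using gam_sets act_space s by simp
      fix A assume "A \<in> sets (distr (\<gamma> s) S (act g))"
      then have A: "A \<in> sets S" by simp
      have "emeasure (distr (\<gamma> s) S (act g)) A = emeasure (\<gamma> s) (act g -` A \<inter> space (\<gamma> s))"
        by (rule emeasure_distr[OF ag A])
      also have "\<dots> = emeasure (\<gamma> (act g s)) A"
        using gam_inv[OF s A] sets_eq_imp_space_eq[OF gam_sets[OF s]] by simp
      finally show "emeasure (distr (\<gamma> s) S (act g)) A = emeasure (\<gamma> (act g s)) A" .
    qed
    have Fm: "F (act g s) \<in> borel_measurable S"
      using F2[OF measurable_const measurable_ident_sets[OF refl]] act_space[OF s] by simp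
    have "(\<integral>\<^sup>+t. F (act g s) t \<partial>\<gamma> (act g s)) = (\<integral>\<^sup>+t. F (act g s) t \<partial>distr (\<gamma> s) S (act g))"
      by (simp add: d)
    also have "\<dots> = (\<integral>\<^sup>+t. F (act g s) (act g t) \<partial>\<gamma> s)"
      by (rule nn_integral_distr[OF ag], subst measurable_cong_sets[OF sets_distr refl], rule Fm)
    finally show ?thesis by simp
  qed
  define Psi where "Psi s = (\<integral>\<^sup>+t. F s t \<partial>\<gamma> s)" for s
  have Pm: "Psi \<in> borel_measurable S" unfolding Psi_def by (rule Psi_meas[OF F])
  have agm: "act g \<in> mu \<rightarrow>\<^sub>M S" by (subst measurable_cong_sets[OF mu_sets refl]) (rule act_g_meas)
  have dm: "distr mu S (act g) = mu"
  proof (rule measure_eqI)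
    show "sets (distr mu S (act g)) = sets mu" using mu_sets by simp
    fix A assume "A \<in> sets (distr mu S (act g))"
    then have A: "A \<in> sets S" by simp
    show "emeasure (distr mu S (act g)) A = emeasure mu A"
      using emeasure_distr[OF agm A] mu_inv[OF A] by simp
  qed
  have "L (\<lambda>s t. F (act g s) (act g t)) = (\<integral>\<^sup>+s. Psi (act g s) \<partial>mu)"
    unfolding L_def Psi_def by (intro nn_integral_cong) (simp add: step1)
  also have "\<dots> = (\<integral>\<^sup>+s. Psi s \<partial>distr mu S (act g))"
    by (rule nn_integral_distr[OF agm, symmetric], subst measurable_cong_sets[OF sets_distr refl], rule Pm)
  also have "\<dots> = L F" unfolding dm L_def Psi_def ..
  finally show ?thesis .
qed

definition OI :: "('s \<Rightarrow> ennreal) \<Rightarrow> 's \<Rightarrow> ennreal" where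
  "OI b s = (\<integral>\<^sup>+h. b (act h s) \<partial>lam)"

lemma OI_meas[measurable]:
  assumes [measurable]: "b \<in> borel_measurable S"
  shows "OI b \<in> borel_measurable S"
proof -
  have "(\<lambda>(s, h). b (act h s)) \<in> borel_measurable (S \<Otimes>\<^sub>M lam)"
    by (simp add: split_beta') measurable
  from lam.borel_measurable_nn_integral[OF this] show ?thesis unfolding OI_def by simp
qed

lemma OI_shift: "s \<in> space S \<Longrightarrow> OI b (act x s) = (\<integral>\<^sup>+y. b (act (y \<otimes>\<^bsub>G\<^esub> x) s) \<partial>lam)"
  unfolding OI_def by (simp add: act_mult)


lemma act_s_meas: assumes s: "s \<in> space S" shows "(\<lambda>y. act y s) \<in> borel \<rightarrow>\<^sub>M S"
proof -
  have "(\<lambda>y::'g. s) \<in> borel \<rightarrow>\<^sub>M S" using s by simp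
  from act_measurable[OF measurable_ident this] show ?thesis by (simp add: id_def)
qed

lemma K_lemma:
  assumes v[measurable]: "v \<in> borel_measurable S" and vpos: "\<And>s. s \<in> space S \<Longrightarrow> 0 < OI v s \<and> OI v s < \<infinity>"
    and b[measurable]: "b \<in> borel_measurable S" and s: "s \<in> space S"
  shows "(\<integral>\<^sup>+h. b (act (inv\<^bsub>G\<^esub> h) s) / OI v (act (inv\<^bsub>G\<^esub> h) s) \<partial>lam) = OI b s / OI v s"
proof -
  note as[measurable] = act_s_meas[OF s]
  define f where "f y = v (act y s)" for y
  define g where "g x = b (act x s) / OI v (act x s)" for x
  have fm[measurable]: "f \<in> borel_measurable borel" unfolding f_def by measurable
  have gm[measurable]: "g \<in> borel_measurable borel" unfolding g_def by measurable
  have W: "(\<integral>\<^sup>+x. g x * (\<integral>\<^sup>+y. f (y \<otimes>\<^bsub>G\<^esub> x) \<partial>lam) \<partial>lam) = (\<integral>\<^sup>+y. f y \<partial>lam) * (\<integral>\<^sup>+x. g (inv\<^bsub>G\<^esub> x) \<partial>lam)"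
    by (rule weil[OF fm gm])
  have "(\<integral>\<^sup>+x. g x * (\<integral>\<^sup>+y. f (y \<otimes>\<^bsub>G\<^esub> x) \<partial>lam) \<partial>lam) = (\<integral>\<^sup>+x. b (act x s) \<partial>lam)"
  proof (rule nn_integral_cong)
    fix x
    have xs: "act x s \<in> space S" using act_space[OF s] .
    have eq: "(\<integral>\<^sup>+y. f (y \<otimes>\<^bsub>G\<^esub> x) \<partial>lam) = OI v (act x s)" unfolding f_def using OI_shift[OF s] by simp
    have c: "OI v (act x s) \<noteq> 0" "OI v (act x s) \<noteq> \<top>" using vpos[OF xs] by auto
    show "g x * (\<integral>\<^sup>+y. f (y \<otimes>\<^bsub>G\<^esub> x) \<partial>lam) = b (act x s)"
      unfolding g_def by (simp only: eq ediv_mult_cancel[OF c])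
  qed
  then have "OI v s * (\<integral>\<^sup>+x. g (inv\<^bsub>G\<^esub> x) \<partial>lam) = OI b s"
    using W unfolding OI_def f_def by simp
  then have "(\<integral>\<^sup>+x. g (inv\<^bsub>G\<^esub> x) \<partial>lam) = OI b s / OI v s"
    using vpos[OF s] by (intro ediv_solve) auto
  then show ?thesis unfolding g_def .
qed


lemma star:
  assumes v[measurable]: "v \<in> borel_measurable S" and vpos: "\<And>s. s \<in> space S \<Longrightarrow> 0 < OI v s \<and> OI v s < \<infinity>"
    and a[measurable]: "a \<in> borel_measurable S" and b[measurable]: "b \<in> borel_measurable S"
  shows "L (\<lambda>s t. OI a t * (b s / OI v s) * m s t) = L (\<lambda>s t. a t * (OI b s / OI v s) * m s t)"
proof -
  have e1: "L (\<lambda>s t. OI a t * (b s / OI v s) * m s t) =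
      L (\<lambda>s t. \<integral>\<^sup>+h. a (act h t) * (b s / OI v s * m s t) \<partial>lam)"
  proof (rule L_cong)
    fix s t assume s: "s \<in> space S" and t: "t \<in> space S"
    have "(\<lambda>h. a (act h t)) \<in> borel_measurable lam"
      using act_s_meas[OF t] by (simp cong: measurable_cong_sets)
    from nn_integral_multc[OF this, of "b s / OI v s * m s t"]
    show "OI a t * (b s / OI v s) * m s t = (\<integral>\<^sup>+h. a (act h t) * (b s / OI v s * m s t) \<partial>lam)"
      unfolding OI_def by (simp add: mult.assoc)
  qed
  also have "\<dots> = (\<integral>\<^sup>+h. L (\<lambda>s t. a (act h t) * (b s / OI v s * m s t)) \<partial>lam)"
    by (rule L_swap) measurable
  also have "\<dots> = (\<integral>\<^sup>+h. L (\<lambda>s t. a t * (b (act (inv\<^bsub>G\<^esub> h) s) / OI v (act (inv\<^bsub>G\<^esub> h) s) * m s t)) \<partial>lam)"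
  proof (rule nn_integral_cong)
    fix h
    define F where "F s t = a t * (b (act (inv\<^bsub>G\<^esub> h) s) / OI v (act (inv\<^bsub>G\<^esub> h) s) * m s t)" for s t
    have Fm: "(\<lambda>(s,t). F s t) \<in> borel_measurable (S \<Otimes>\<^sub>M S)" unfolding F_def by measurable
    have "L (\<lambda>s t. a (act h t) * (b s / OI v s * m s t)) = L (\<lambda>s t. F (act h s) (act h t))"
      by (rule L_cong) (simp add: F_def m_inv)
    also have "\<dots> = L F" by (rule L_inv[OF Fm])
    finally show "L (\<lambda>s t. a (act h t) * (b s / OI v s * m s t)) =
      L (\<lambda>s t. a t * (b (act (inv\<^bsub>G\<^esub> h) s) / OI v (act (inv\<^bsub>G\<^esub> h) s) * m s t))"
      unfolding F_def .
  qed
  also have "\<dots> = L (\<lambda>s t. \<integral>\<^sup>+h. a t * (b (act (inv\<^bsub>G\<^esub> h) s) / OI v (act (inv\<^bsub>G\<^esub> h) s) * m s t) \<partial>lam)"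
    by (rule L_swap[symmetric]) measurable
  also have "\<dots> = L (\<lambda>s t. a t * (OI b s / OI v s) * m s t)"
  proof (rule L_cong)
    fix s t assume s: "s \<in> space S" and t: "t \<in> space S"
    note as[measurable] = act_s_meas[OF s]
    have "(\<lambda>h. b (act (inv\<^bsub>G\<^esub> h) s) / OI v (act (inv\<^bsub>G\<^esub> h) s)) \<in> borel_measurable lam"
      by (subst measurable_cong_sets[OF sets_lam refl]) measurable
    from nn_integral_multc[OF this, of "a t * m s t"]
    have "(\<integral>\<^sup>+h. a t * (b (act (inv\<^bsub>G\<^esub> h) s) / OI v (act (inv\<^bsub>G\<^esub> h) s) * m s t) \<partial>lam)
        = (\<integral>\<^sup>+h. b (act (inv\<^bsub>G\<^esub> h) s) / OI v (act (inv\<^bsub>G\<^esub> h) s) \<partial>lam) * (a t * m s t)"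
      by (simp add: ac_simps)
    also have "\<dots> = (OI b s / OI v s) * (a t * m s t)"
      by (simp add: K_lemma[OF v vpos b s])
    finally show "(\<integral>\<^sup>+h. a t * (b (act (inv\<^bsub>G\<^esub> h) s) / OI v (act (inv\<^bsub>G\<^esub> h) s) * m s t) \<partial>lam)
        = a t * (OI b s / OI v s) * m s t" by (simp add: ac_simps)
  qed
  finally show ?thesis .
qed


lemma OI_weil:
  assumes b[measurable]: "b \<in> borel_measurable S" and s: "s \<in> space S" and A[measurable]: "A \<in> sets borel"
  shows "(\<integral>\<^sup>+y. indicator A y * OI b (act y s) \<partial>lam) = OI b s * (\<integral>\<^sup>+y. indicator A (inv\<^bsub>G\<^esub> y) \<partial>lam)"
proof -
  note as[measurable] = act_s_meas[OF s]
  have fm: "(\<lambda>z. b (act z s)) \<in> borel_measurable borel" by measurable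
  have gm: "indicator A \<in> borel_measurable borel" by measurable
  have "(\<integral>\<^sup>+y. indicator A y * OI b (act y s) \<partial>lam) = (\<integral>\<^sup>+y. indicator A y * (\<integral>\<^sup>+z. b (act (z \<otimes>\<^bsub>G\<^esub> y) s) \<partial>lam) \<partial>lam)"
    using OI_shift[OF s] by simp
  also have "\<dots> = OI b s * (\<integral>\<^sup>+y. indicator A (inv\<^bsub>G\<^esub> y) \<partial>lam)"
    using weil[OF fm gm] unfolding OI_def by (simp add: act_mult s)
  finally show ?thesis .
qed

lemma rho_ae:
  assumes v[measurable]: "v \<in> borel_measurable S" and vpos: "\<And>s. s \<in> space S \<Longrightarrow> 0 < OI v s \<and> OI v s < \<infinity>"
    and w[measurable]: "w \<in> borel_measurable S" and s: "s \<in> space S"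
  shows "AE y in lam. OI w (act y s) / OI v (act y s) = OI w s / OI v s"
proof -
  note as[measurable] = act_s_meas[OF s]
  have "AE y in lam. OI v s * OI w (act y s) = OI w s * OI v (act y s)"
  proof (rule ae_from_integrals)
    fix A :: "'g set" assume A[measurable]: "A \<in> sets borel"
    have "(\<integral>\<^sup>+y. indicator A y * (OI v s * OI w (act y s)) \<partial>lam) = OI v s * (\<integral>\<^sup>+y. indicator A y * OI w (act y s) \<partial>lam)"
      by (subst nn_integral_cmult[symmetric]) (measurable, simp add: ac_simps)
    also have "\<dots> = OI v s * (OI w s * (\<integral>\<^sup>+y. indicator A (inv\<^bsub>G\<^esub> y) \<partial>lam))"
      by (simp add: OI_weil[OF w s A])
    also have "\<dots> = OI w s * (OI v s * (\<integral>\<^sup>+y. indicator A (inv\<^bsub>G\<^esub> y) \<partial>lam))"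
      by (simp add: ac_simps)
    also have "\<dots> = OI w s * (\<integral>\<^sup>+y. indicator A y * OI v (act y s) \<partial>lam)"
      by (simp add: OI_weil[OF v s A])
    also have "\<dots> = (\<integral>\<^sup>+y. indicator A y * (OI w s * OI v (act y s)) \<partial>lam)"
      by (subst nn_integral_cmult[symmetric]) (measurable, simp add: ac_simps)
    finally show "(\<integral>\<^sup>+y. indicator A y * (OI v s * OI w (act y s)) \<partial>lam) = (\<integral>\<^sup>+y. indicator A y * (OI w s * OI v (act y s)) \<partial>lam)" .
  qed measurable
  then show ?thesis
  proof (elim AE_mp, intro AE_I2 impI)
    fix y assume eq: "OI v s * OI w (act y s) = OI w s * OI v (act y s)"
    have ys: "act y s \<in> space S" using act_space[OF s] .
    show "OI w (act y s) / OI v (act y s) = OI w s / OI v s"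
      using vpos[OF s] vpos[OF ys] by (intro ediv_cross[OF eq]) auto
  qed
qed

lemma rho_all:
  assumes v[measurable]: "v \<in> borel_measurable S" and vpos: "\<And>s. s \<in> space S \<Longrightarrow> 0 < OI v s \<and> OI v s < \<infinity>"
    and w[measurable]: "w \<in> borel_measurable S" and s: "s \<in> space S"
  shows "OI w (act x s) / OI v (act x s) = OI w s / OI v s"
proof -
  define \<rho> where "\<rho> s = OI w s / OI v s" for s
  have rm[measurable]: "\<rho> \<in> borel_measurable S" unfolding \<rho>_def by measurable
  define Z where "Z s = {y. \<rho> (act y s) \<noteq> \<rho> s}" for s
  have Z: "Z s \<in> sets borel \<and> emeasure lam (Z s) = 0" if s: "s \<in> space S" for s
  proof -
    note as[measurable] = act_s_meas[OF s]
    have Zm: "Z s \<in> sets borel" unfolding Z_def by measurable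
    have "AE y in lam. \<rho> (act y s) = \<rho> s" unfolding \<rho>_def by (rule rho_ae[OF v vpos w s])
    moreover have "{y \<in> space lam. \<not> \<rho> (act y s) = \<rho> s} = Z s" unfolding Z_def by simp
    ultimately have "emeasure lam (Z s) = 0"
      using AE_iff_measurable[of "Z s" lam] Zm sets_lam by simp
    then show ?thesis using Zm by simp
  qed
  define s' where "s' = act x s"
  have s': "s' \<in> space S" unfolding s'_def using act_space[OF s] .
  define R where "R = {y. y \<otimes>\<^bsub>G\<^esub> x \<in> Z s}"
  have Zs[measurable]: "Z s \<in> sets borel" using Z[OF s] by simp
  have Rm: "R \<in> sets borel" unfolding R_def by measurable
  have R0: "emeasure lam R = 0" unfolding R_def using Z[OF s] right_null by auto
  have "emeasure lam (Z s' \<union> R) \<le> emeasure lam (Z s') + emeasure lam R"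
    using Z[OF s'] Rm sets_lam by (intro emeasure_subadditive) auto
  then have "emeasure lam (Z s' \<union> R) = 0" using Z[OF s'] R0 by simp
  then have "Z s' \<union> R \<noteq> UNIV" using pos by auto
  then obtain y where y: "y \<notin> Z s'" "y \<notin> R" by auto
  have "\<rho> s' = \<rho> (act y s')" using y(1) unfolding Z_def by simp
  also have "act y s' = act (y \<otimes>\<^bsub>G\<^esub> x) s" unfolding s'_def by (simp add: act_mult s)
  also have "\<rho> (act (y \<otimes>\<^bsub>G\<^esub> x) s) = \<rho> s" using y(2) unfolding R_def Z_def by simp
  finally show ?thesis unfolding \<rho>_def s'_def .
qed

end



context main_ctx begin
lemma L_cmult:
  assumes F[measurable]: "(\<lambda>(s,t). F s t) \<in> borel_measurable (S \<Otimes>\<^sub>M S)"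
  shows "L (\<lambda>s t. c * F s t) = c * L F"
proof -
  have "L (\<lambda>s t. c * F s t) = (\<integral>\<^sup>+s. c * (\<integral>\<^sup>+t. F s t \<partial>\<gamma> s) \<partial>mu)"
    unfolding L_def
  proof (rule nn_integral_cong)
    fix s assume s: "s \<in> space mu"
    have "F s \<in> borel_measurable S" using measurable_Pair2[OF F, of s] s by (simp add: split_beta')
    then have "F s \<in> borel_measurable (\<gamma> s)" using s by (subst measurable_cong_sets[OF gam_sets refl]) auto
    then show "(\<integral>\<^sup>+t. c * F s t \<partial>\<gamma> s) = c * (\<integral>\<^sup>+t. F s t \<partial>\<gamma> s)" by (rule nn_integral_cmult)
  qed
  also have "\<dots> = c * L F" unfolding L_def
    by (rule nn_integral_cmult) (subst measurable_cong_sets[OF mu_sets refl], rule Psi_meas[OF F])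
  finally show ?thesis .
qed
end

lemma balance_ext:
  fixes S :: "'s measure" and mu nu :: "'s measure" and \<gamma> \<delta> :: "'s \<Rightarrow> 's measure"
  assumes mu_sets: "sets mu = sets S" and nu_sets: "sets nu = sets S"
    and gs: "\<And>s. s \<in> space S \<Longrightarrow> sets (\<gamma> s) = sets S"
    and ds: "\<And>s. s \<in> space S \<Longrightarrow> sets (\<delta> s) = sets S"
    and gm: "\<And>u. u \<in> borel_measurable (S \<Otimes>\<^sub>M S) \<Longrightarrow> (\<lambda>s. \<integral>\<^sup>+t. u (s,t) \<partial>\<gamma> s) \<in> borel_measurable S"
    and dm: "\<And>u. u \<in> borel_measurable (S \<Otimes>\<^sub>M S) \<Longrightarrow> (\<lambda>t. \<integral>\<^sup>+s. u (s,t) \<partial>\<delta> t) \<in> borel_measurable S"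
    and bal: "\<And>C. C \<in> sets (S \<Otimes>\<^sub>M S) \<Longrightarrow>
        (\<integral>\<^sup>+ s. (\<integral>\<^sup>+ t. indicator C (s, t) \<partial>\<gamma> s) \<partial>mu) =
        (\<integral>\<^sup>+ t. (\<integral>\<^sup>+ s. indicator C (s, t) \<partial>\<delta> t) \<partial>nu)"
    and u: "u \<in> borel_measurable (S \<Otimes>\<^sub>M S)"
  shows "(\<integral>\<^sup>+ s. (\<integral>\<^sup>+ t. u (s, t) \<partial>\<gamma> s) \<partial>mu) = (\<integral>\<^sup>+ t. (\<integral>\<^sup>+ s. u (s, t) \<partial>\<delta> t) \<partial>nu)"
proof -
  have smu: "space mu = space S" using sets_eq_imp_space_eq[OF mu_sets] .
  have snu: "space nu = space S" using sets_eq_imp_space_eq[OF nu_sets] .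
  have sg: "s \<in> space S \<Longrightarrow> space (\<gamma> s) = space S" for s using sets_eq_imp_space_eq[OF gs] .
  have sd: "s \<in> space S \<Longrightarrow> space (\<delta> s) = space S" for s using sets_eq_imp_space_eq[OF ds] .
  have m1: "(\<lambda>t. f (s,t)) \<in> borel_measurable (\<gamma> s)" if "f \<in> borel_measurable (S \<Otimes>\<^sub>M S)" "s \<in> space S" for f s
    using measurable_Pair2[OF that] gs[OF that(2)] by (simp cong: measurable_cong_sets)
  have m2: "(\<lambda>s. f (s,t)) \<in> borel_measurable (\<delta> t)" if "f \<in> borel_measurable (S \<Otimes>\<^sub>M S)" "t \<in> space S" for f t
    using measurable_Pair1[OF that] ds[OF that(2)] by (simp cong: measurable_cong_sets)
  have gm': "(\<lambda>s. \<integral>\<^sup>+t. f (s,t) \<partial>\<gamma> s) \<in> borel_measurable mu" if "f \<in> borel_measurable (S \<Otimes>\<^sub>M S)" for f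
    using gm[OF that] mu_sets by (simp cong: measurable_cong_sets)
  have dm': "(\<lambda>t. \<integral>\<^sup>+s. f (s,t) \<partial>\<delta> t) \<in> borel_measurable nu" if "f \<in> borel_measurable (S \<Otimes>\<^sub>M S)" for f
    using dm[OF that] nu_sets by (simp cong: measurable_cong_sets)
  from u show ?thesis
  proof (induct rule: borel_measurable_induct)
    case (cong f g)
    have "(\<integral>\<^sup>+ s. (\<integral>\<^sup>+ t. f (s, t) \<partial>\<gamma> s) \<partial>mu) = (\<integral>\<^sup>+ s. (\<integral>\<^sup>+ t. g (s, t) \<partial>\<gamma> s) \<partial>mu)"
      using cong(3) by (intro nn_integral_cong) (simp add: smu sg space_pair_measure)
    also have "\<dots> = (\<integral>\<^sup>+ t. (\<integral>\<^sup>+ s. g (s, t) \<partial>\<delta> t) \<partial>nu)" by (rule cong(4))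
    also have "\<dots> = (\<integral>\<^sup>+ t. (\<integral>\<^sup>+ s. f (s, t) \<partial>\<delta> t) \<partial>nu)"
      using cong(3) by (intro nn_integral_cong) (simp add: snu sd space_pair_measure)
    finally show ?case .
  next
    case (set A) then show ?case by (rule bal)
  next
    case (mult f c)
    have "(\<integral>\<^sup>+ s. (\<integral>\<^sup>+ t. c * f (s, t) \<partial>\<gamma> s) \<partial>mu) = (\<integral>\<^sup>+ s. c * (\<integral>\<^sup>+ t. f (s, t) \<partial>\<gamma> s) \<partial>mu)"
      using mult(2) by (intro nn_integral_cong nn_integral_cmult m1) (auto simp: smu)
    also have "\<dots> = c * (\<integral>\<^sup>+ s. (\<integral>\<^sup>+ t. f (s, t) \<partial>\<gamma> s) \<partial>mu)"
      using mult(2) by (intro nn_integral_cmult gm')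
    also have "\<dots> = c * (\<integral>\<^sup>+ t. (\<integral>\<^sup>+ s. f (s, t) \<partial>\<delta> t) \<partial>nu)" using mult(4) by simp
    also have "\<dots> = (\<integral>\<^sup>+ t. c * (\<integral>\<^sup>+ s. f (s, t) \<partial>\<delta> t) \<partial>nu)"
      using mult(2) by (intro nn_integral_cmult[symmetric] dm')
    also have "\<dots> = (\<integral>\<^sup>+ t. (\<integral>\<^sup>+ s. c * f (s, t) \<partial>\<delta> t) \<partial>nu)"
      using mult(2) by (intro nn_integral_cong nn_integral_cmult[symmetric] m2) (auto simp: snu)
    finally show ?case .
  next
    case (add f g)
    have "(\<integral>\<^sup>+ s. (\<integral>\<^sup>+ t. g (s, t) + f (s, t) \<partial>\<gamma> s) \<partial>mu) = (\<integral>\<^sup>+ s. (\<integral>\<^sup>+ t. g (s, t) \<partial>\<gamma> s) + (\<integral>\<^sup>+ t. f (s, t) \<partial>\<gamma> s) \<partial>mu)"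
      using add by (intro nn_integral_cong nn_integral_add m1) (auto simp: smu)
    also have "\<dots> = (\<integral>\<^sup>+ s. (\<integral>\<^sup>+ t. g (s, t) \<partial>\<gamma> s) \<partial>mu) + (\<integral>\<^sup>+ s. (\<integral>\<^sup>+ t. f (s, t) \<partial>\<gamma> s) \<partial>mu)"
      using add by (intro nn_integral_add gm')
    also have "\<dots> = (\<integral>\<^sup>+ t. (\<integral>\<^sup>+ s. g (s, t) \<partial>\<delta> t) \<partial>nu) + (\<integral>\<^sup>+ t. (\<integral>\<^sup>+ s. f (s, t) \<partial>\<delta> t) \<partial>nu)"
      using add by simp
    also have "\<dots> = (\<integral>\<^sup>+ t. (\<integral>\<^sup>+ s. g (s, t) \<partial>\<delta> t) + (\<integral>\<^sup>+ s. f (s, t) \<partial>\<delta> t) \<partial>nu)"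
      using add by (intro nn_integral_add[symmetric] dm')
    also have "\<dots> = (\<integral>\<^sup>+ t. (\<integral>\<^sup>+ s. g (s, t) + f (s, t) \<partial>\<delta> t) \<partial>nu)"
      using add by (intro nn_integral_cong nn_integral_add[symmetric] m2) (auto simp: snu)
    finally show ?case .
  next
    case (seq U)
    have "(\<integral>\<^sup>+ s. (\<integral>\<^sup>+ t. (SUP i. U i) (s, t) \<partial>\<gamma> s) \<partial>mu) = (\<integral>\<^sup>+ s. (SUP i. \<integral>\<^sup>+ t. U i (s, t) \<partial>\<gamma> s) \<partial>mu)"
    proof (rule nn_integral_cong)
      fix s assume s: "s \<in> space mu"
      have "(\<integral>\<^sup>+ t. (SUP i. U i (s, t)) \<partial>\<gamma> s) = (SUP i. \<integral>\<^sup>+ t. U i (s, t) \<partial>\<gamma> s)"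
        using seq(1,4) s by (intro nn_integral_monotone_convergence_SUP m1) (auto simp: incseq_def le_fun_def smu)
      then show "(\<integral>\<^sup>+ t. (SUP i. U i) (s, t) \<partial>\<gamma> s) = (SUP i. \<integral>\<^sup>+ t. U i (s, t) \<partial>\<gamma> s)" by (simp add: image_comp)
    qed
    also have "\<dots> = (SUP i. \<integral>\<^sup>+ s. (\<integral>\<^sup>+ t. U i (s, t) \<partial>\<gamma> s) \<partial>mu)"
      using seq(1,4) by (intro nn_integral_monotone_convergence_SUP gm')
        (auto simp: incseq_def le_fun_def intro!: nn_integral_mono)
    also have "\<dots> = (SUP i. \<integral>\<^sup>+ t. (\<integral>\<^sup>+ s. U i (s, t) \<partial>\<delta> t) \<partial>nu)" using seq(3) by simp
    also have "\<dots> = (\<integral>\<^sup>+ t. (SUP i. \<integral>\<^sup>+ s. U i (s, t) \<partial>\<delta> t) \<partial>nu)"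
      using seq(1,4) by (intro nn_integral_monotone_convergence_SUP[symmetric] dm')
        (auto simp: incseq_def le_fun_def intro!: nn_integral_mono)
    also have "\<dots> = (\<integral>\<^sup>+ t. (\<integral>\<^sup>+ s. (SUP i. U i) (s, t) \<partial>\<delta> t) \<partial>nu)"
    proof (rule nn_integral_cong)
      fix t assume t: "t \<in> space nu"
      have "(\<integral>\<^sup>+ s. (SUP i. U i (s, t)) \<partial>\<delta> t) = (SUP i. \<integral>\<^sup>+ s. U i (s, t) \<partial>\<delta> t)"
        using seq(1,4) t by (intro nn_integral_monotone_convergence_SUP m2) (auto simp: incseq_def le_fun_def snu)
      then show "(SUP i. \<integral>\<^sup>+ s. U i (s, t) \<partial>\<delta> t) = (\<integral>\<^sup>+ s. (SUP i. U i) (s, t) \<partial>\<delta> t)" by (simp add: image_comp)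
    qed
    finally show ?case .
  qed
qed




theorem proposition6p7:
  fixes G :: "('g::{second_countable_topology,t2_space}, 'b) monoid_scheme"
    and lam :: "'g measure" and S :: "'s measure" and act :: "'g \<Rightarrow> 's \<Rightarrow> 's" and Orb :: "'s set"
    and mu nu :: "'s measure" and \<gamma> \<delta> :: "'s \<Rightarrow> 's measure"
    and v w :: "'s \<Rightarrow> ennreal" and m :: "'s \<Rightarrow> 's \<Rightarrow> ennreal"
  assumes G: "lcsc_topological_group G"
    and haar: "left_haar_measure G lam"
    and S: "borel_space S"
    and act: "measurable_action G S act"
    and proper: "proper_action lam S act"
    and O: "orbit_representatives S act Orb"
    and mu: "invariant_measure S act mu" "sigma_finite_measure mu"
    and nu: "invariant_measure S act nu" "sigma_finite_measure nu"
    and \<gamma>: "invariant_kernel S act \<gamma>"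
    and \<delta>: "invariant_kernel S act \<delta>"
    and balance: "\<And>C. C \<in> sets (S \<Otimes>\<^sub>M S) \<Longrightarrow>
        (\<integral>\<^sup>+ s. (\<integral>\<^sup>+ t. indicator C (s, t) \<partial>\<gamma> s) \<partial>mu) =
        (\<integral>\<^sup>+ t. (\<integral>\<^sup>+ s. indicator C (s, t) \<partial>\<delta> t) \<partial>nu)"
    and v: "v \<in> borel_measurable S"
    and w: "w \<in> borel_measurable S"
    and v_pos: "\<And>s. s \<in> space S \<Longrightarrow> 0 < (\<integral>\<^sup>+ x. v x \<partial>orbit_measure lam S act s)
                   \<and> (\<integral>\<^sup>+ x. v x \<partial>orbit_measure lam S act s) < \<infinity>"
    and w_pos: "\<And>s. s \<in> space S \<Longrightarrow> 0 < (\<integral>\<^sup>+ x. w x \<partial>orbit_measure lam S act s)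
                   \<and> (\<integral>\<^sup>+ x. w x \<partial>orbit_measure lam S act s) < \<infinity>"
    and ratio: "\<And>b b'. b \<in> Orb \<Longrightarrow> b' \<in> Orb \<Longrightarrow>
        (\<integral>\<^sup>+ x. w x \<partial>orbit_measure lam S act b) / (\<integral>\<^sup>+ x. v x \<partial>orbit_measure lam S act b) =
        (\<integral>\<^sup>+ x. w x \<partial>orbit_measure lam S act b') / (\<integral>\<^sup>+ x. v x \<partial>orbit_measure lam S act b')"
    and m_meas: "(\<lambda>(s, t). m s t) \<in> borel_measurable (S \<Otimes>\<^sub>M S)"
    and m_inv: "\<And>g s t. s \<in> space S \<Longrightarrow> t \<in> space S \<Longrightarrow> m (act g s) (act g t) = m s t"
  shows "(\<integral>\<^sup>+ s. (\<integral>\<^sup>+ t. ((\<integral>\<^sup>+ x. v x \<partial>orbit_measure lam S act t) / (\<integral>\<^sup>+ x. v x \<partial>orbit_measure lam S act s))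
              * w s * m s t \<partial>\<gamma> s) \<partial>mu) =
         (\<integral>\<^sup>+ t. (\<integral>\<^sup>+ s. w t * m s t \<partial>\<delta> t) \<partial>nu)"
proof -
  from G have grp: "group G" and carr: "carrier G = UNIV"
    and cm: "continuous_on UNIV (\<lambda>(x,y). x \<otimes>\<^bsub>G\<^esub> y)" and ci: "continuous_on UNIV (\<lambda>x. inv\<^bsub>G\<^esub> x)"
    and lc: "locally_compact_space (euclidean :: 'g topology)"
    unfolding lcsc_topological_group_def by auto
  from haar have sets_lam: "sets lam = sets borel"
    and fincomp: "\<And>K. compact K \<Longrightarrow> emeasure lam K < \<infinity>"
    and posopen: "\<And>U. open U \<Longrightarrow> U \<noteq> {} \<Longrightarrow> emeasure lam U > 0"
    and limg: "\<And>g A. A \<in> sets borel \<Longrightarrow> emeasure lam ((\<lambda>x. g \<otimes>\<^bsub>G\<^esub> x) ` A) = emeasure lam A"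
    unfolding left_haar_measure_def by auto
  have space_lam: "space lam = UNIV" using sets_eq_imp_space_eq[OF sets_lam] by simp
  have mult_meas: "(\<lambda>p. fst p \<otimes>\<^bsub>G\<^esub> snd p) \<in> (borel \<Otimes>\<^sub>M borel) \<rightarrow>\<^sub>M borel"
  proof -
    have "(\<lambda>(x,y). x \<otimes>\<^bsub>G\<^esub> y) \<in> borel_measurable borel" by (rule borel_measurable_continuous_onI[OF cm])
    then show ?thesis by (simp add: borel_prod split_beta')
  qed
  have inv_meas: "(\<lambda>x. inv\<^bsub>G\<^esub> x) \<in> borel \<rightarrow>\<^sub>M borel" by (rule borel_measurable_continuous_onI[OF ci])
  have linv: "(\<integral>\<^sup>+x. f (a \<otimes>\<^bsub>G\<^esub> x) \<partial>lam) = (\<integral>\<^sup>+x. f x \<partial>lam)" if f: "f \<in> borel_measurable borel" for a f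
  proof -
    have "(\<lambda>x. (a, x)) \<in> borel \<rightarrow>\<^sub>M (borel \<Otimes>\<^sub>M borel)" by simp
    from measurable_compose[OF this mult_meas]
    have T0: "(\<lambda>x. a \<otimes>\<^bsub>G\<^esub> x) \<in> borel \<rightarrow>\<^sub>M borel" by simp
    then have T: "(\<lambda>x. a \<otimes>\<^bsub>G\<^esub> x) \<in> lam \<rightarrow>\<^sub>M borel" by (simp cong: measurable_cong_sets add: sets_lam)
    have pre: "(\<lambda>x. a \<otimes>\<^bsub>G\<^esub> x) -` A = (\<lambda>x. inv\<^bsub>G\<^esub> a \<otimes>\<^bsub>G\<^esub> x) ` A" for A
    proof -
      have m: "monoid G" using grp by (rule group.is_monoid)
      have c1: "inv\<^bsub>G\<^esub> a \<otimes>\<^bsub>G\<^esub> (a \<otimes>\<^bsub>G\<^esub> x) = x" for x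
        using grp carr by (simp add: monoid.m_assoc[OF m, symmetric] group.l_inv monoid.l_one[OF m])
      have c2: "a \<otimes>\<^bsub>G\<^esub> (inv\<^bsub>G\<^esub> a \<otimes>\<^bsub>G\<^esub> x) = x" for x
        using grp carr by (simp add: monoid.m_assoc[OF m, symmetric] group.r_inv monoid.l_one[OF m])
      show ?thesis
      proof (rule Set.set_eqI)
        fix x
        show "x \<in> (\<lambda>x. a \<otimes>\<^bsub>G\<^esub> x) -` A \<longleftrightarrow> x \<in> (\<lambda>x. inv\<^bsub>G\<^esub> a \<otimes>\<^bsub>G\<^esub> x) ` A"
        proof
          assume "x \<in> (\<lambda>x. a \<otimes>\<^bsub>G\<^esub> x) -` A"
          then have "a \<otimes>\<^bsub>G\<^esub> x \<in> A" by simp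
          moreover have "x = inv\<^bsub>G\<^esub> a \<otimes>\<^bsub>G\<^esub> (a \<otimes>\<^bsub>G\<^esub> x)" using c1[of x] by simp
          ultimately show "x \<in> (\<lambda>x. inv\<^bsub>G\<^esub> a \<otimes>\<^bsub>G\<^esub> x) ` A" by (rule rev_image_eqI)
        next
          assume "x \<in> (\<lambda>x. inv\<^bsub>G\<^esub> a \<otimes>\<^bsub>G\<^esub> x) ` A"
          then obtain y where "y \<in> A" "x = inv\<^bsub>G\<^esub> a \<otimes>\<^bsub>G\<^esub> y" by auto
          then show "x \<in> (\<lambda>x. a \<otimes>\<^bsub>G\<^esub> x) -` A" using c2 by simp
        qed
      qed
    qed
    have d: "distr lam borel (\<lambda>x. a \<otimes>\<^bsub>G\<^esub> x) = lam"
    proof (rule measure_eqI)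
      show "sets (distr lam borel (\<lambda>x. a \<otimes>\<^bsub>G\<^esub> x)) = sets lam" by (simp add: sets_lam)
      fix A assume "A \<in> sets (distr lam borel (\<lambda>x. a \<otimes>\<^bsub>G\<^esub> x))"
      then have A: "A \<in> sets borel" by simp
      show "emeasure (distr lam borel (\<lambda>x. a \<otimes>\<^bsub>G\<^esub> x)) A = emeasure lam A"
        using emeasure_distr[OF T A] space_lam pre limg[OF A] by simp
    qed
    have "(\<integral>\<^sup>+x. f x \<partial>lam) = (\<integral>\<^sup>+x. f x \<partial>distr lam borel (\<lambda>x. a \<otimes>\<^bsub>G\<^esub> x))" by (simp add: d)
    also have "\<dots> = (\<integral>\<^sup>+x. f (a \<otimes>\<^bsub>G\<^esub> x) \<partial>lam)"
      by (rule nn_integral_distr[OF T], subst measurable_cong_sets[OF sets_distr refl], rule f)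
    finally show ?thesis by simp
  qed
  have sf: "sigma_finite_measure lam"
  proof -
    obtain BB :: "'g set set" where BB: "countable BB" "topological_basis BB" using ex_countable_basis by blast
    define C where "C = {b \<in> BB. \<exists>K. compact K \<and> b \<subseteq> K}"
    define KK where "KK b = (SOME K :: 'g set. compact K \<and> b \<subseteq> K)" for b :: "'g set"
    have KK: "compact (KK b) \<and> b \<subseteq> KK b" if "b \<in> C" for b
    proof -
      have "\<exists>K. compact K \<and> b \<subseteq> K" using that unfolding C_def by auto
      from someI_ex[OF this] show ?thesis unfolding KK_def .
    qed
    show ?thesis unfolding sigma_finite_measure_def
    proof (intro exI conjI)
      show "countable (KK ` C)" using BB(1) unfolding C_def by auto
      show "KK ` C \<subseteq> sets lam" using KK by (auto simp: sets_lam intro!: borel_closed compact_imp_closed)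
      show "\<Union> (KK ` C) = space lam"
      proof (rule Set.set_eqI, rule iffI)
        fix x :: 'g assume "x \<in> space lam"
        obtain U K where UK: "openin euclidean U" "compactin euclidean K" "x \<in> U" "U \<subseteq> K"
          using lc unfolding locally_compact_space_def by (simp, meson)
        then have "open U" "compact K" by auto
        obtain b where b: "b \<in> BB" "x \<in> b" "b \<subseteq> U" using topological_basisE[OF BB(2) \<open>open U\<close> UK(3)] by blast
        then have "b \<in> C" unfolding C_def using UK(4) \<open>compact K\<close> by auto
        then show "x \<in> \<Union> (KK ` C)" using KK b by blast
      qed (simp add: space_lam)
      show "\<forall>a\<in>KK ` C. emeasure lam a \<noteq> \<infinity>" using KK fincomp by (auto simp: less_top)
    qed
  qed
  have pos: "emeasure lam UNIV > 0" using posopen[of UNIV] by simp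
  have HC: "haar_ctx G lam" by (rule haar_ctx.intro[OF grp carr mult_meas inv_meas sets_lam linv sf pos])
  interpret haar_ctx G lam by (rule HC)
  from act have act_one: "\<And>s. s \<in> space S \<Longrightarrow> act \<one>\<^bsub>G\<^esub> s = s"
    and act_mult: "\<And>g h s. s \<in> space S \<Longrightarrow> act (g \<otimes>\<^bsub>G\<^esub> h) s = act g (act h s)"
    and act_meas: "(\<lambda>(g,s). act g s) \<in> (borel \<Otimes>\<^sub>M S) \<rightarrow>\<^sub>M S"
    unfolding measurable_action_def by blast+
  from mu(1) have mu_sets: "sets mu = sets S"
    and mu_inv: "\<And>g A. A \<in> sets S \<Longrightarrow> emeasure mu (act g -` A \<inter> space S) = emeasure mu A"
    unfolding invariant_measure_def by blast+
  have gk: "sigma_finite_kernel S \<gamma>" using \<gamma> unfolding invariant_kernel_def by (rule conjunct1)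
  have gi: "\<forall>g. \<forall>s\<in>space S. \<forall>B\<in>sets S. emeasure (\<gamma> (act g s)) B = emeasure (\<gamma> s) (act g -` B \<inter> space S)"
    using \<gamma> unfolding invariant_kernel_def by (rule conjunct2)
  have gam_sets: "\<And>s. s \<in> space S \<Longrightarrow> sets (\<gamma> s) = sets S"
    using gk unfolding sigma_finite_kernel_def by (elim conjE) (rule bspec)
  have gam_meas: "\<And>A. A \<in> sets S \<Longrightarrow> (\<lambda>s. emeasure (\<gamma> s) A) \<in> borel_measurable S"
    using gk unfolding sigma_finite_kernel_def by (elim conjE) (rule bspec)
  have gam_inv: "\<And>g s A. s \<in> space S \<Longrightarrow> A \<in> sets S \<Longrightarrow> emeasure (\<gamma> (act g s)) A = emeasure (\<gamma> s) (act g -` A \<inter> space S)"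
    using gi by (elim allE ballE) auto
  have "\<exists>B::nat \<Rightarrow> 's set. range B \<subseteq> sets S \<and> disjoint_family B \<and> (\<Union>n. B n) = space S \<and>
        (\<forall>s\<in>space S. \<forall>n. emeasure (\<gamma> s) (B n) < \<infinity>)"
    using gk unfolding sigma_finite_kernel_def by (elim conjE)
  then obtain Bg :: "nat \<Rightarrow> 's set" where Bg0: "range Bg \<subseteq> sets S \<and> disjoint_family Bg \<and> (\<Union>n. Bg n) = space S \<and>
        (\<forall>s\<in>space S. \<forall>n. emeasure (\<gamma> s) (Bg n) < \<infinity>)" ..
  have Bg: "range Bg \<subseteq> sets S" "disjoint_family Bg" "(\<Union>n. Bg n) = space S"
    "\<And>s n. s \<in> space S \<Longrightarrow> emeasure (\<gamma> s) (Bg n) < \<infinity>"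
    using Bg0 by blast+
  have dk: "sigma_finite_kernel S \<delta>" using \<delta> unfolding invariant_kernel_def by (rule conjunct1)
  have del_sets: "\<And>s. s \<in> space S \<Longrightarrow> sets (\<delta> s) = sets S"
    using dk unfolding sigma_finite_kernel_def by (elim conjE) (rule bspec)
  have del_meas: "\<And>A. A \<in> sets S \<Longrightarrow> (\<lambda>s. emeasure (\<delta> s) A) \<in> borel_measurable S"
    using dk unfolding sigma_finite_kernel_def by (elim conjE) (rule bspec)
  have "\<exists>B::nat \<Rightarrow> 's set. range B \<subseteq> sets S \<and> disjoint_family B \<and> (\<Union>n. B n) = space S \<and>
        (\<forall>s\<in>space S. \<forall>n. emeasure (\<delta> s) (B n) < \<infinity>)"
    using dk unfolding sigma_finite_kernel_def by (elim conjE)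
  then obtain Bd :: "nat \<Rightarrow> 's set" where Bd0: "range Bd \<subseteq> sets S \<and> disjoint_family Bd \<and> (\<Union>n. Bd n) = space S \<and>
        (\<forall>s\<in>space S. \<forall>n. emeasure (\<delta> s) (Bd n) < \<infinity>)" ..
  have Bd: "range Bd \<subseteq> sets S" "disjoint_family Bd" "(\<Union>n. Bd n) = space S"
    "\<And>s n. s \<in> space S \<Longrightarrow> emeasure (\<delta> s) (Bd n) < \<infinity>"
    using Bd0 by blast+
  from nu(1) have nu_sets: "sets nu = sets S" unfolding invariant_measure_def by (rule conjunct1)
  interpret main_ctx G lam S act mu \<gamma> m Bg
  proof (rule main_ctx.intro[OF HC], rule main_ctx_axioms.intro)
  qed (fact act_meas act_one act_mult mu_sets mu_inv mu(2) gam_sets gam_meas Bg gam_inv m_meas m_inv)+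
  have oi: "(\<integral>\<^sup>+x. b x \<partial>orbit_measure lam S act s) = OI b s" if "b \<in> borel_measurable S" "s \<in> space S" for b s
  proof -
    have T: "(\<lambda>g. act g s) \<in> lam \<rightarrow>\<^sub>M S"
      using act_s_meas[OF that(2)] by (simp cong: measurable_cong_sets add: sets_lam)
    have bm: "b \<in> borel_measurable (distr lam S (\<lambda>g. act g s))"
      by (subst measurable_cong_sets[OF sets_distr refl]) (rule that(1))
    from nn_integral_distr[OF T bm] show ?thesis unfolding orbit_measure_def OI_def by simp
  qed
  note v[measurable] w[measurable]
  have vpos: "0 < OI v s \<and> OI v s < \<infinity>" if "s \<in> space S" for s using v_pos[OF that] oi[OF v that] by simp
  have wpos: "0 < OI w s \<and> OI w s < \<infinity>" if "s \<in> space S" for s using w_pos[OF that] oi[OF w that] by simp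
  define b0 where "b0 = (SOME b. b \<in> Orb)"
  define c0 where "c0 = OI w b0 / OI v b0"
  have OrbS: "Orb \<subseteq> space S" using O unfolding orbit_representatives_def by (auto dest: sets.sets_into_space)
  have hc: "OI w s / OI v s = c0" if s: "s \<in> space S" for s
  proof -
    obtain b g where b: "b \<in> Orb" "act g b = s" using O s unfolding orbit_representatives_def by blast
    have b0: "b0 \<in> Orb" unfolding b0_def using b(1) by (rule someI)
    have bS: "b \<in> space S" and b0S: "b0 \<in> space S" using b(1) b0 OrbS by auto
    have "OI w s / OI v s = OI w b / OI v b" using rho_all[OF v vpos w, of b g] b OrbS by auto
    also have "OI w b / OI v b = OI w b0 / OI v b0"
      using ratio[OF b(1) b0] oi[OF w bS] oi[OF v bS] oi[OF w b0S] oi[OF v b0S] by simp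
    finally show ?thesis unfolding c0_def .
  qed
  have hw: "OI w s = c0 * OI v s" if s: "s \<in> space S" for s
    using hc[OF s] vpos[OF s] ediv_mult_cancel[of "OI v s" "OI w s"] by (auto simp: mult.commute)
  have hv: "v t * (OI v s / OI v s) * m s t = v t * m s t" if s: "s \<in> space S" for s t
  proof -
    have "OI v s / OI v s = 1" using vpos[OF s] ediv_mult_cancel[of "OI v s" 1] by auto
    then show ?thesis by simp
  qed
  have hw1: "w t * (OI v s / OI v s) * m s t = w t * m s t" if s: "s \<in> space S" for s t
  proof -
    have "OI v s / OI v s = 1" using vpos[OF s] ediv_mult_cancel[of "OI v s" 1] by auto
    then show ?thesis by simp
  qed
  have LHS: "(\<integral>\<^sup>+ s. (\<integral>\<^sup>+ t. ((\<integral>\<^sup>+ x. v x \<partial>orbit_measure lam S act t) / (\<integral>\<^sup>+ x. v x \<partial>orbit_measure lam S act s))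
              * w s * m s t \<partial>\<gamma> s) \<partial>mu) = L (\<lambda>s t. OI v t * (w s / OI v s) * m s t)"
    unfolding L_def
  proof (rule nn_integral_cong)
    fix s assume s: "s \<in> space mu"
    then have s': "s \<in> space S" by simp
    show "(\<integral>\<^sup>+ t. ((\<integral>\<^sup>+ x. v x \<partial>orbit_measure lam S act t) / (\<integral>\<^sup>+ x. v x \<partial>orbit_measure lam S act s))
              * w s * m s t \<partial>\<gamma> s) = (\<integral>\<^sup>+ t. OI v t * (w s / OI v s) * m s t \<partial>\<gamma> s)"
    proof (rule nn_integral_cong)
      fix t assume "t \<in> space (\<gamma> s)"
      then have t: "t \<in> space S" using sets_eq_imp_space_eq[OF gam_sets[OF s']] by simp
      show "((\<integral>\<^sup>+ x. v x \<partial>orbit_measure lam S act t) / (\<integral>\<^sup>+ x. v x \<partial>orbit_measure lam S act s))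
              * w s * m s t = OI v t * (w s / OI v s) * m s t"
        using oi[OF v t] oi[OF v s'] by (simp add: divide_ennreal_def ac_simps)
    qed
  qed
  have Pm: "(\<lambda>(s,t). u (s,t)) = u" for u :: "'s \<times> 's \<Rightarrow> ennreal" by auto
  have RHS: "(\<integral>\<^sup>+ t. (\<integral>\<^sup>+ s. w t * m s t \<partial>\<delta> t) \<partial>nu) = L (\<lambda>s t. w t * m s t)"
  proof -
    have um: "(\<lambda>(s,t). w t * m s t) \<in> borel_measurable (S \<Otimes>\<^sub>M S)" by measurable
    have "(\<integral>\<^sup>+ s. (\<integral>\<^sup>+ t. (\<lambda>(s,t). w t * m s t) (s, t) \<partial>\<gamma> s) \<partial>mu) = (\<integral>\<^sup>+ t. (\<integral>\<^sup>+ s. (\<lambda>(s,t). w t * m s t) (s, t) \<partial>\<delta> t) \<partial>nu)"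
    proof (rule balance_ext[OF mu_sets nu_sets gam_sets del_sets _ _ balance um])
      fix u :: "'s \<times> 's \<Rightarrow> ennreal" assume u: "u \<in> borel_measurable (S \<Otimes>\<^sub>M S)"
      then show "(\<lambda>s. \<integral>\<^sup>+t. u (s,t) \<partial>\<gamma> s) \<in> borel_measurable S"
        using Psi_meas[of "\<lambda>s t. u (s,t)"] by simp
      have "(\<lambda>(t,s). u (s,t)) \<in> borel_measurable (S \<Otimes>\<^sub>M S)"
        using measurable_compose[OF measurable_Pair[OF measurable_snd measurable_fst] u] by (simp add: split_beta')
      from kernel_nn_integral_measurable[OF del_sets del_meas Bd this]
      show "(\<lambda>t. \<integral>\<^sup>+s. u (s,t) \<partial>\<delta> t) \<in> borel_measurable S" by simp
    qed
    then show ?thesis unfolding L_def by simp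
  qed
  have m1: "(\<lambda>(s,t). v t * m s t) \<in> borel_measurable (S \<Otimes>\<^sub>M S)" by measurable
  have m2: "(\<lambda>(s,t). OI v t * (v s / OI v s) * m s t) \<in> borel_measurable (S \<Otimes>\<^sub>M S)" by measurable
  have "L (\<lambda>s t. OI v t * (w s / OI v s) * m s t) = L (\<lambda>s t. v t * (OI w s / OI v s) * m s t)"
    by (rule star[OF v vpos v w])
  also have "\<dots> = L (\<lambda>s t. c0 * (v t * m s t))"
    by (rule L_cong) (simp add: hc ac_simps)
  also have "\<dots> = c0 * L (\<lambda>s t. v t * m s t)" by (rule L_cmult[OF m1])
  finally have l: "L (\<lambda>s t. OI v t * (w s / OI v s) * m s t) = c0 * L (\<lambda>s t. v t * m s t)" .
  have "L (\<lambda>s t. w t * m s t) = L (\<lambda>s t. w t * (OI v s / OI v s) * m s t)"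
    by (rule L_cong) (simp add: hw1)
  also have "\<dots> = L (\<lambda>s t. OI w t * (v s / OI v s) * m s t)"
    by (rule star[OF v vpos w v, symmetric])
  also have "\<dots> = L (\<lambda>s t. c0 * (OI v t * (v s / OI v s) * m s t))"
    by (rule L_cong) (simp add: hw ac_simps)
  also have "\<dots> = c0 * L (\<lambda>s t. OI v t * (v s / OI v s) * m s t)" by (rule L_cmult[OF m2])
  also have "L (\<lambda>s t. OI v t * (v s / OI v s) * m s t) = L (\<lambda>s t. v t * (OI v s / OI v s) * m s t)"
    by (rule star[OF v vpos v v])
  also have "\<dots> = L (\<lambda>s t. v t * m s t)" by (rule L_cong) (simp add: hv)
  finally have r: "L (\<lambda>s t. w t * m s t) = c0 * L (\<lambda>s t. v t * m s t)" .
  show ?thesis using LHS RHS l r by simp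
qed


end
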